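(* Let $M=p_1^{n_1}\cdots p_K^{n_K}$ with distinct primes and $n_\nu\in\mathbb{N}$, and let $A\oplus B=\mathbb{Z}_M$. Fix distinct $i,j\in\{1,\dots,K\}$, let $z\in\mathbb{Z}_M$ and $\Lambda_{ij}=\Lambda(z,M/(p_ip_j))$. Suppose that $a_0*F_i\subset A$ for some $a_0\in\Sigma_A(\Lambda_{ij})$. Then $\Sigma_A(\Lambda_{ij})\subset\Pi(a_0,p_j^{n_j-1})$.
   Context: $A\oplus B=\mathbb{Z}_M$ means every element of $\mathbb{Z}_M$ is uniquely $a+b$ with $a\in A$, $b\in B$. For $d\mid M$, $\Lambda(x,d)=\{x'\in\mathbb{Z}_M: d\mid x-x'\}$, and $\Pi(x,p^\alpha)=\Lambda(x,p^\alpha)$. $F_i=\{0,M/p_i,\dots,(p_i-1)M/p_i\}$, $x*F_i=\{x+f:f\in F_i\}$. For $Z\subset\mathbb{Z}_M$, $\Sigma_A(Z)=\{a\in A:a+b\in Z\text{ for some }b\in B\}$. *)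

theory Defs
  imports "HOL-Number_Theory.Number_Theory"
begin

text \<open>Z_M is modelled as {0..<M} :: nat set, with addition mod M.\<close>

definition ZM :: "nat \<Rightarrow> nat set" where
  "ZM M = {0..<M}"

definition tiling :: "nat \<Rightarrow> nat set \<Rightarrow> nat set \<Rightarrow> bool" where
  "tiling M A B \<longleftrightarrow> A \<subseteq> ZM M \<and> B \<subseteq> ZM M \<and>
     (\<forall>x\<in>ZM M. \<exists>!ab. ab \<in> A \<times> B \<and> (fst ab + snd ab) mod M = x)"

definition Lam :: "nat \<Rightarrow> nat \<Rightarrow> nat \<Rightarrow> nat set" where
  "Lam M x d = {x' \<in> ZM M. int d dvd int x - int x'}"

definition Pi_set :: "nat \<Rightarrow> nat \<Rightarrow> nat \<Rightarrow> nat set" where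
  "Pi_set M x q = Lam M x q"

definition F :: "nat \<Rightarrow> nat \<Rightarrow> nat set" where
  "F M p = {k * (M div p) | k. k < p}"

definition star :: "nat \<Rightarrow> nat \<Rightarrow> nat set \<Rightarrow> nat set" where
  "star M x S = {(x + f) mod M | f. f \<in> S}"

definition SigmaA :: "nat \<Rightarrow> nat set \<Rightarrow> nat set \<Rightarrow> nat set \<Rightarrow> nat set" where
  "SigmaA M A B Z = {a \<in> A. \<exists>b\<in>B. (a + b) mod M \<in> Z}"

end

theory Submission
  imports Defs "HOL-Computational_Algebra.Polynomial"
begin

definition pc :: "nat \<Rightarrow> int poly \<Rightarrow> int poly \<Rightarrow> bool" where
  "pc p P Q \<longleftrightarrow> (\<exists>R. P = Q + smult (int p) R)"

lemma pc_refl: "pc p P P" unfolding pc_def by (rule exI[of _ 0]) simp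

lemma pc_trans: "pc p P Q \<Longrightarrow> pc p Q S \<Longrightarrow> pc p P S"
proof -
  assume "pc p P Q" "pc p Q S"
  then obtain R1 R2 where "P = Q + smult (int p) R1" "Q = S + smult (int p) R2" unfolding pc_def by blast
  then have "P = S + smult (int p) (R2 + R1)" by (simp add: smult_add_right algebra_simps)
  then show ?thesis unfolding pc_def by blast
qed

lemma pc_add: "pc p P Q \<Longrightarrow> pc p P' Q' \<Longrightarrow> pc p (P + P') (Q + Q')"
proof -
  assume "pc p P Q" "pc p P' Q'"
  then obtain R1 R2 where "P = Q + smult (int p) R1" "P' = Q' + smult (int p) R2" unfolding pc_def by blast
  then have "P + P' = (Q + Q') + smult (int p) (R1 + R2)" by (simp add: smult_add_right algebra_simps)
  then show ?thesis unfolding pc_def by blast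
qed

lemma pc_mult: "pc p P Q \<Longrightarrow> pc p (P * S) (Q * S)"
proof -
  assume "pc p P Q"
  then obtain R1 where "P = Q + smult (int p) R1" unfolding pc_def by blast
  then have "P * S = Q * S + smult (int p) (R1 * S)" by (simp add: algebra_simps)
  then show ?thesis unfolding pc_def by blast
qed

lemma ofnat_smult: "(of_nat n :: int poly) * Y = smult (int n) Y"
  by (simp add: of_nat_poly)

lemma smult_sum_r: "smult c (\<Sum>i\<in>S. f i) = (\<Sum>i\<in>S. smult c (f i))"
  by (induct S rule: infinite_finite_induct) (auto simp: smult_add_right)

lemma frob:
  assumes "prime p"
  shows "pc p ((P + Q) ^ p) (P ^ p + Q ^ p)"
proof -
  have p0: "p > 0" using assms prime_gt_0_nat by blast
  have "(P + Q) ^ p = (\<Sum>k\<le>p. of_nat (p choose k) * P ^ k * Q ^ (p - k))"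
    by (rule binomial_ring)
  also have "{..p} = insert p (insert 0 {1..<p})" using p0 by auto
  also have "(\<Sum>k\<in>insert p (insert 0 {1..<p}). of_nat (p choose k) * P ^ k * Q ^ (p - k))
     = P ^ p + (Q ^ p + (\<Sum>k\<in>{1..<p}. of_nat (p choose k) * P ^ k * Q ^ (p - k)))"
    using p0 by simp
  also have "(\<Sum>k\<in>{1..<p}. of_nat (p choose k) * P ^ k * Q ^ (p - k))
      = smult (int p) (\<Sum>k\<in>{1..<p}. of_nat ((p choose k) div p) * P ^ k * Q ^ (p - k))"
  proof -
    have "\<And>k. k \<in> {1..<p} \<Longrightarrow> of_nat (p choose k) * P ^ k * Q ^ (p - k)
         = smult (int p) (of_nat ((p choose k) div p) * P ^ k * Q ^ (p - k))"
    proof -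
      fix k assume k: "k \<in> {1..<p}"
      have "p dvd p choose k" using dvd_choose_prime[of k p] k assms p0 by auto
      then have "p choose k = p * ((p choose k) div p)" by simp
      then have eq: "int (p choose k) = int p * int ((p choose k) div p)" by (metis of_nat_mult)
      have "of_nat (p choose k) * P ^ k * Q ^ (p - k) = smult (int (p choose k)) (P^k * Q^(p-k))"
        by (simp add: ofnat_smult mult.assoc)
      also have "\<dots> = smult (int p) (smult (int ((p choose k) div p)) (P^k * Q^(p-k)))"
        by (simp only: eq smult_smult)
      also have "\<dots> = smult (int p) (of_nat ((p choose k) div p) * P ^ k * Q ^ (p - k))"
        by (simp add: ofnat_smult mult.assoc)
      finally show "of_nat (p choose k) * P ^ k * Q ^ (p - k)
         = smult (int p) (of_nat ((p choose k) div p) * P ^ k * Q ^ (p - k))" .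
    qed
    then show ?thesis by (simp add: smult_sum_r)
  qed
  finally have "(P + Q) ^ p = (P ^ p + Q ^ p) + smult (int p) (\<Sum>k\<in>{1..<p}. of_nat ((p choose k) div p) * P ^ k * Q ^ (p - k))"
    by (simp add: add.assoc)
  then show ?thesis unfolding pc_def by blast
qed

definition foldM :: "nat \<Rightarrow> int poly \<Rightarrow> nat \<Rightarrow> int" where
  "foldM M P x = (\<Sum>k<Suc (degree P). if k mod M = x then coeff P k else 0)"

lemma foldM_bound:
  assumes "degree P < N"
  shows "foldM M P x = (\<Sum>k<N. if k mod M = x then coeff P k else 0)"
  unfolding foldM_def
proof (rule sum.mono_neutral_left)
  show "\<forall>i\<in>{..<N} - {..<Suc (degree P)}. (if i mod M = x then coeff P i else 0) = 0"
    by (auto simp: coeff_eq_0)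
qed (use assms in auto)

lemma foldM_add: "foldM M (P + Q) x = foldM M P x + foldM M Q x"
proof -
  define N where "N = Suc (max (degree P) (degree Q))"
  have d: "degree (P + Q) < N" "degree P < N" "degree Q < N"
    using degree_add_le_max[of P Q] unfolding N_def by auto
  show ?thesis
    unfolding foldM_bound[OF d(1)] foldM_bound[OF d(2)] foldM_bound[OF d(3)]
    by (simp add: sum.distrib[symmetric] if_distrib) (rule sum.cong, auto)
qed

lemma foldM_smult: "foldM M (smult c P) x = c * foldM M P x"
proof -
  have d: "degree (smult c P) < Suc (degree P)" "degree P < Suc (degree P)"
    using degree_smult_le[of c P] by auto
  show ?thesis
    unfolding foldM_bound[OF d(1)] foldM_bound[OF d(2)] sum_distrib_left
    by (intro sum.cong) auto
qed

lemma foldM_zero: "foldM M 0 x = 0"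
  unfolding foldM_def by simp

lemma foldM_sum: "foldM M (\<Sum>i\<in>I. f i) x = (\<Sum>i\<in>I. foldM M (f i) x)"
  by (induct I rule: infinite_finite_induct) (auto simp: foldM_zero foldM_add)

lemma foldM_monom: "foldM M (monom 1 k) x = (if k mod M = x then 1 else 0)"
proof -
  have d: "degree (monom (1::int) k) < Suc k" by (simp add: degree_monom_eq)
  have "foldM M (monom 1 k) x = (\<Sum>j<Suc k. if j = k then (if k mod M = x then 1 else 0) else 0)"
    unfolding foldM_bound[OF d] by (rule sum.cong) (auto simp: coeff_monom)
  also have "\<dots> = (if k mod M = x then 1 else 0)" by (subst sum.delta) auto
  finally show ?thesis .
qed

lemma foldM_card:
  assumes "finite I"
  shows "foldM M (\<Sum>i\<in>I. monom 1 (g i)) x = int (card {i\<in>I. g i mod M = x})"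
  using assms by (simp add: foldM_sum foldM_monom sum.If_cases Int_def)

lemma foldM_pc: "pc p P Q \<Longrightarrow> int p dvd foldM M P x - foldM M Q x"
  unfolding pc_def by (auto simp: foldM_add foldM_smult)

lemma suc_mod_iff:
  assumes "0 < M" "x < M"
  shows "(Suc k mod M = x) \<longleftrightarrow> (k mod M = (x + M - 1) mod M)"
proof -
  have r: "k mod M < M" using assms by simp
  have e: "Suc k mod M = Suc (k mod M) mod M" by (simp add: mod_Suc_eq)
  show ?thesis
  proof (cases "Suc (k mod M) = M")
    case True
    then have "Suc k mod M = 0" using e by simp
    moreover have "(x + M - 1) mod M = (if x = 0 then M - 1 else x - 1)"
      using assms by (cases "x = 0") (auto simp: mod_if)
    ultimately show ?thesis using True assms by auto
  next
    case False
    then have "Suc k mod M = Suc (k mod M)" using e r by simp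
    moreover have "(x + M - 1) mod M = (if x = 0 then M - 1 else x - 1)"
      using assms by (cases "x = 0") (auto simp: mod_if)
    ultimately show ?thesis using False r assms by auto
  qed
qed

lemma foldM_pCons0:
  assumes "0 < M" "x < M"
  shows "foldM M (pCons 0 T) x = foldM M T ((x + M - 1) mod M)"
proof -
  have d: "degree (pCons 0 T) < Suc (Suc (degree T))"
    by (cases "T = 0") auto
  have "foldM M (pCons 0 T) x = (\<Sum>k<Suc (Suc (degree T)). if k mod M = x then coeff (pCons 0 T) k else 0)"
    by (rule foldM_bound[OF d])
  also have "\<dots> = (if 0 mod M = x then coeff (pCons 0 T) 0 else 0) +
      (\<Sum>k<Suc (degree T). if Suc k mod M = x then coeff (pCons 0 T) (Suc k) else 0)"
    by (subst sum.lessThan_Suc_shift) simp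
  also have "\<dots> = (\<Sum>k<Suc (degree T). if k mod M = (x + M - 1) mod M then coeff T k else 0)"
    by (simp only: coeff_pCons_0 coeff_pCons_Suc if_cancel add_0 suc_mod_iff[OF assms])
  finally show ?thesis unfolding foldM_def .
qed

lemma foldM_conv:
  assumes "0 < M" "\<forall>y<M. foldM M R y = c"
  shows "\<forall>x<M. foldM M (S * R) x = poly S 1 * c"
proof (induct S)
  case 0
  then show ?case using assms by (simp add: foldM_zero)
next
  case (pCons a S)
  show ?case
  proof (intro allI impI)
    fix x assume x: "x < M"
    have "foldM M (pCons a S * R) x = a * foldM M R x + foldM M (pCons 0 (S * R)) x"
      by (simp add: mult_pCons_left foldM_add foldM_smult)
    also have "\<dots> = a * c + poly S 1 * c"
      using foldM_pCons0[OF assms(1) x] pCons(2) assms x by simp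
    finally show "foldM M (pCons a S * R) x = poly (pCons a S) 1 * c"
      by (simp add: algebra_simps)
  qed
qed

definition PA :: "nat set \<Rightarrow> int poly" where
  "PA S = (\<Sum>a\<in>S. monom 1 a)"

lemma PA_power:
  assumes "prime p" "finite S"
  shows "pc p (PA S ^ p) (\<Sum>a\<in>S. monom 1 (p * a))"
  using assms(2)
proof (induct S rule: finite_induct)
  case empty
  have "p > 0" using assms(1) prime_gt_0_nat by blast
  then show ?case by (simp add: PA_def pc_refl zero_power)
next
  case (insert a S)
  have "PA (insert a S) = monom 1 a + PA S" using insert by (simp add: PA_def)
  then have "pc p (PA (insert a S) ^ p) (monom 1 a ^ p + PA S ^ p)"
    using frob[OF assms(1)] by simp
  moreover have "monom (1::int) a ^ p = monom 1 (p * a)" by (simp add: monom_power mult.commute)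
  ultimately have "pc p (PA (insert a S) ^ p) (monom 1 (p * a) + PA S ^ p)" by simp
  moreover have "pc p (monom 1 (p * a) + PA S ^ p) (monom 1 (p * a) + (\<Sum>a\<in>S. monom 1 (p * a)))"
    by (rule pc_add[OF pc_refl insert(3)])
  ultimately show ?case using insert by (simp add: pc_trans)
qed

lemma sum_monom_mult:
  assumes "finite A" "finite B"
  shows "(\<Sum>a\<in>A. monom (1::int) (f a)) * (\<Sum>b\<in>B. monom 1 b) = (\<Sum>ab\<in>A\<times>B. monom 1 (f (fst ab) + snd ab))"
  by (simp add: sum_product mult_monom sum.cartesian_product case_prod_beta)

lemma tiling_basic:
  assumes "tiling M A B"
  shows "finite A" "finite B" "card A * card B = M"
proof -
  have sub: "A \<subseteq> ZM M" "B \<subseteq> ZM M" using assms unfolding tiling_def by auto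
  show fA: "finite A" and fB: "finite B" using sub finite_subset unfolding ZM_def by auto
  have "bij_betw (\<lambda>ab. (fst ab + snd ab) mod M) (A \<times> B) (ZM M)"
  proof (rule bij_betw_imageI)
    show "inj_on (\<lambda>ab. (fst ab + snd ab) mod M) (A \<times> B)"
    proof (rule inj_onI)
      fix u v assume u: "u \<in> A \<times> B" and v: "v \<in> A \<times> B"
        and e: "(fst u + snd u) mod M = (fst v + snd v) mod M"
      have "(fst u + snd u) mod M \<in> ZM M"
      proof -
        have "fst u \<in> ZM M" using u sub by auto
        then have "M > 0" unfolding ZM_def by auto
        then show ?thesis unfolding ZM_def by simp
      qed
      then have ex: "\<exists>!ab. ab \<in> A \<times> B \<and> (fst ab + snd ab) mod M = (fst u + snd u) mod M"
        using assms unfolding tiling_def by blast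
      have Pu: "u \<in> A \<times> B \<and> (fst u + snd u) mod M = (fst u + snd u) mod M" using u by simp
      have Pv: "v \<in> A \<times> B \<and> (fst v + snd v) mod M = (fst u + snd u) mod M" using v e by simp
      show "u = v" using the1_equality[OF ex Pu] the1_equality[OF ex Pv] by simp
    qed
    show "(\<lambda>ab. (fst ab + snd ab) mod M) ` (A \<times> B) = ZM M"
    proof
      show "(\<lambda>ab. (fst ab + snd ab) mod M) ` (A \<times> B) \<subseteq> ZM M"
      proof
        fix y assume "y \<in> (\<lambda>ab. (fst ab + snd ab) mod M) ` (A \<times> B)"
        then obtain u where u: "u \<in> A \<times> B" "y = (fst u + snd u) mod M" by blast
        have "fst u \<in> ZM M" using u sub by auto
        then have "M > 0" unfolding ZM_def by auto
        then show "y \<in> ZM M" using u unfolding ZM_def by simp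
      qed
      show "ZM M \<subseteq> (\<lambda>ab. (fst ab + snd ab) mod M) ` (A \<times> B)"
      proof
        fix x assume x: "x \<in> ZM M"
        have "\<exists>!ab. ab \<in> A \<times> B \<and> (fst ab + snd ab) mod M = x"
          using assms x unfolding tiling_def by blast
        then obtain ab where ab: "ab \<in> A \<times> B" "(fst ab + snd ab) mod M = x" by blast
        show "x \<in> (\<lambda>ab. (fst ab + snd ab) mod M) ` (A \<times> B)"
          by (rule image_eqI[where x=ab]) (use ab in auto)
      qed
    qed
  qed
  then have "card (A \<times> B) = card (ZM M)" by (rule bij_betw_same_card)
  then show "card A * card B = M" by (simp add: card_cartesian_product ZM_def)
qed

lemma dilate_prime:
  assumes tile: "tiling M A B" and pr: "prime p" and ndvd: "\<not> p dvd M"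
  shows "tiling M ((\<lambda>a. p * a mod M) ` A) B"
proof -
  have M0: "M > 0" using ndvd by (cases M) auto
  have fA: "finite A" and fB: "finite B" and cM: "card A * card B = M"
    using tiling_basic[OF tile] by auto
  have subB: "B \<subseteq> ZM M" using tile unfolding tiling_def by auto
  define r where "r x = card {ab \<in> A \<times> B. (p * fst ab + snd ab) mod M = x}" for x
  have c1: "\<forall>y<M. foldM M (PA A * PA B) y = 1"
  proof (intro allI impI)
    fix y assume y: "y < M"
    then have "\<exists>!ab. ab \<in> A \<times> B \<and> (fst ab + snd ab) mod M = y"
      using tile unfolding tiling_def ZM_def by auto
    then obtain ab0 where "{ab \<in> A \<times> B. (fst ab + snd ab) mod M = y} = {ab0}" by blast
    then have "card {ab \<in> A \<times> B. (fst ab + snd ab) mod M = y} = 1" by simp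
    then show "foldM M (PA A * PA B) y = 1"
      unfolding PA_def using sum_monom_mult[OF fA fB, of "\<lambda>a. a"] foldM_card[of "A \<times> B"] fA fB
      by simp
  qed
  have polyPA: "poly (PA A) 1 = int (card A)"
    unfolding PA_def by (simp add: poly_sum poly_monom)
  have c2: "foldM M (PA A ^ p * PA B) x = int (card A) ^ (p - 1)" if x: "x < M" for x
  proof -
    have "p = Suc (p - 1)" using pr prime_gt_0_nat by simp
    then have "PA A ^ p = PA A ^ (p - 1) * PA A" by (metis power_Suc2)
    then have e2: "PA A ^ p * PA B = PA A ^ (p - 1) * (PA A * PA B)"
      by (simp add: mult.assoc)
    show ?thesis unfolding e2 using foldM_conv[OF M0 c1, rule_format, OF x, of "PA A ^ (p - 1)"] polyPA by (simp add: poly_power)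
  qed
  have c3: "pc p (PA A ^ p * PA B) ((\<Sum>a\<in>A. monom 1 (p * a)) * PA B)"
    by (rule pc_mult[OF PA_power[OF pr fA]])
  have c4: "foldM M ((\<Sum>a\<in>A. monom 1 (p * a)) * PA B) x = int (r x)" for x
    unfolding PA_def r_def using sum_monom_mult[OF fA fB, of "\<lambda>a. p * a"] foldM_card[of "A \<times> B"] fA fB
    by simp
  have rpos: "r x \<ge> 1" if x: "x < M" for x
  proof (rule ccontr)
    assume "\<not> r x \<ge> 1"
    then have "r x = 0" by simp
    then have "int p dvd int (card A) ^ (p - 1)"
      using foldM_pc[OF c3, of M x] c2[OF x] c4[of x] by simp
    then have "p dvd card A ^ (p - 1)" by (metis of_nat_dvd_iff of_nat_power)
    then have "p dvd card A" using pr prime_dvd_power by blast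
    then have "p dvd M" using cM by (metis dvd_mult2)
    then show False using ndvd by simp
  qed
  have rsum: "(\<Sum>x<M. r x) = M"
  proof -
    have "(\<Sum>x\<in>{..<M}. card {ab. ab \<in> A \<times> B \<and> (p * fst ab + snd ab) mod M = x}) = card (A \<times> B)"
    proof -
      have "(\<Sum>y\<in>{..<M}. \<Sum>ab\<in>{ab. ab \<in> A \<times> B \<and> (p * fst ab + snd ab) mod M = y}. (1::nat)) = (\<Sum>ab\<in>A \<times> B. 1)"
        by (rule sum.group) (use fA fB M0 in auto)
      then show ?thesis by simp
    qed
    then show ?thesis using cM unfolding r_def by (simp add: card_cartesian_product)
  qed
  have r1: "r x = 1" if x: "x < M" for x
  proof (rule ccontr)
    assume "r x \<noteq> 1"
    then have r2: "r x \<ge> 2" using rpos[OF x] by simp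
    have e1: "(\<Sum>y<M. r y) = r x + (\<Sum>y\<in>{..<M} - {x}. r y)"
      using x by (simp add: sum.remove)
    have e2: "(\<Sum>y\<in>{..<M} - {x}. r y) \<ge> (\<Sum>y\<in>{..<M} - {x}. 1)"
      by (rule sum_mono) (use rpos in auto)
    have e3: "(\<Sum>y\<in>{..<M} - {x}. (1::nat)) = M - 1" using x by simp
    have "(\<Sum>y<M. r y) \<ge> 2 + (M - 1)" using r2 e1 e2 e3 by linarith
    then show False using rsum M0 by simp
  qed
  show ?thesis
    unfolding tiling_def
  proof (intro conjI ballI)
    show "(\<lambda>a. p * a mod M) ` A \<subseteq> ZM M" using M0 unfolding ZM_def by auto
    show "B \<subseteq> ZM M" by (rule subB)
    fix x assume "x \<in> ZM M"
    then have x: "x < M" unfolding ZM_def by simp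
    have "card {ab \<in> A \<times> B. (p * fst ab + snd ab) mod M = x} = 1" using r1[OF x] unfolding r_def .
    then obtain ab0 where ab0: "{ab \<in> A \<times> B. (p * fst ab + snd ab) mod M = x} = {ab0}"
      by (rule card_1_singletonE)
    have ab0A: "ab0 \<in> A \<times> B" "(p * fst ab0 + snd ab0) mod M = x" using ab0 by auto
    show "\<exists>!ab. ab \<in> (\<lambda>a. p * a mod M) ` A \<times> B \<and> (fst ab + snd ab) mod M = x"
    proof (rule ex1I[of _ "(p * fst ab0 mod M, snd ab0)"])
      show "(p * fst ab0 mod M, snd ab0) \<in> (\<lambda>a. p * a mod M) ` A \<times> B \<and>
          (fst (p * fst ab0 mod M, snd ab0) + snd (p * fst ab0 mod M, snd ab0)) mod M = x"
        using ab0A by (auto simp: mod_add_left_eq)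
      fix ab assume ab: "ab \<in> (\<lambda>a. p * a mod M) ` A \<times> B \<and> (fst ab + snd ab) mod M = x"
      then obtain a where a: "a \<in> A" "fst ab = p * a mod M" by auto
      have "(p * a + snd ab) mod M = x" using ab a by (metis mod_add_left_eq)
      then have "(a, snd ab) \<in> {ab \<in> A \<times> B. (p * fst ab + snd ab) mod M = x}" using a ab by auto
      then have "(a, snd ab) = ab0" using ab0 by auto
      then show "ab = (p * fst ab0 mod M, snd ab0)" using a by (metis fst_conv prod.collapse snd_conv)
    qed
  qed
qed

lemma dilate:
  assumes tile: "tiling M A B" and cop: "coprime t M" and t0: "t > 0"
  shows "tiling M ((\<lambda>a. t * a mod M) ` A) B"
  using cop t0
proof (induct t rule: less_induct)
  case (less t)
  show ?case
  proof (cases "t = 1")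
    case True
    have "(\<lambda>a. t * a mod M) ` A = A"
    proof -
      have "\<And>a. a \<in> A \<Longrightarrow> a < M" using tile unfolding tiling_def ZM_def by auto
      then show ?thesis using True by (auto simp: image_iff)
    qed
    then show ?thesis using tile by simp
  next
    case False
    then obtain q where q: "prime q" "q dvd t" using prime_factor_nat by blast
    then obtain t' where t': "t = q * t'" by blast
    have t'0: "t' > 0" using less(3) t' by auto
    have q1: "q > 1" using q prime_gt_1_nat by blast
    have lt: "t' < t" using t' t'0 q1 by simp
    have cop': "coprime t' M" using less(2) t' by simp
    have nq: "\<not> q dvd M"
    proof
      assume "q dvd M"
      then have "is_unit q" using coprime_common_divisor[OF less(2) q(2)] by blast
      then show False using q(1) not_prime_unit by blast
    qed
    have T': "tiling M ((\<lambda>a. t' * a mod M) ` A) B" using less(1)[OF lt cop' t'0] .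
    have "tiling M ((\<lambda>a. q * a mod M) ` ((\<lambda>a. t' * a mod M) ` A)) B"
      by (rule dilate_prime[OF T' q(1) nq])
    moreover have "(\<lambda>a. q * a mod M) ` ((\<lambda>a. t' * a mod M) ` A) = (\<lambda>a. t * a mod M) ` A"
      unfolding image_image t' by (simp add: mod_mult_right_eq mult.assoc)
    ultimately show ?thesis by simp
  qed
qed

lemma nat_mod_eq_from_int:
  assumes "int M dvd int X - int Y"
  shows "X mod M = Y mod M"
proof -
  have "int X mod int M = int Y mod int M" using assms by (simp add: mod_eq_dvd_iff)
  then have "int (X mod M) = int (Y mod M)" by (simp add: of_nat_mod)
  then show ?thesis by simp
qed

theorem corollary7p2:
  fixes K M :: nat and p n :: "nat \<Rightarrow> nat" and A B :: "nat set" and i j z a0 :: nat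
  assumes primes: "\<forall>\<nu>\<in>{1..K}. prime (p \<nu>)"
    and distinct: "inj_on p {1..K}"
    and exps: "\<forall>\<nu>\<in>{1..K}. n \<nu> \<ge> 1"
    and M_def: "M = (\<Prod>\<nu>\<in>{1..K}. p \<nu> ^ n \<nu>)"
    and tile: "tiling M A B"
    and ij: "i \<in> {1..K}" "j \<in> {1..K}" "i \<noteq> j"
    and z: "z \<in> ZM M"
    and a0: "a0 \<in> SigmaA M A B (Lam M z (M div (p i * p j)))"
    and fiber: "star M a0 (F M (p i)) \<subseteq> A"
  shows "SigmaA M A B (Lam M z (M div (p i * p j))) \<subseteq> Pi_set M a0 (p j ^ (n j - 1))"
proof
  define P where "P = p i"
  define Q where "Q = p j"
  define e where "e = n j"
  have pP: "prime P" and pQ: "prime Q" using primes ij unfolding P_def Q_def by auto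
  have PQ: "P \<noteq> Q" using distinct ij unfolding P_def Q_def inj_on_def by blast
  have e1: "e \<ge> 1" using exps ij unfolding e_def by auto
  have P0: "P > 0" and Q0: "Q > 0" using pP pQ prime_gt_0_nat by auto
  have M0: "M > 0" unfolding M_def using primes prime_gt_0_nat by (auto intro: prod_pos)
  have PM: "P dvd M"
  proof -
    have ni: "n i \<ge> 1" using exps ij(1) by blast
    have "P dvd P ^ n i" using dvd_power[of "n i" P] ni by simp
    also have "P ^ n i dvd M" unfolding M_def P_def using ij by (intro dvd_prodI) auto
    finally show ?thesis .
  qed
  have QeM: "Q ^ e dvd M" unfolding M_def Q_def e_def using ij by (intro dvd_prodI) auto
  have copPQ: "coprime P Q" using primes_coprime[OF pP pQ PQ] .
  have PQeM: "P * Q ^ e dvd M" using divides_mult[OF PM QeM] copPQ by simp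
  define D where "D = M div (P * Q)"
  define MP where "MP = M div P"
  define MQ where "MQ = M div Q"
  have PQM: "P * Q dvd M"
  proof -
    have "Q dvd Q ^ e" using e1 by (simp add: dvd_power)
    then have "P * Q dvd P * Q ^ e" by simp
    then show ?thesis using PQeM dvd_trans by blast
  qed
  have MD: "M = D * P * Q" unfolding D_def using PQM by (simp add: mult.assoc)
  have MPD: "MP = D * Q" unfolding MP_def using MD P0 by simp
  have MQD: "MQ = D * P" unfolding MQ_def using MD Q0 by simp
  have MMP: "M = P * MP" using MD MPD by simp
  have MMQ: "M = MQ * Q" using MD MQD by simp
  have QeMP: "Q ^ e dvd MP"
  proof -
    have "P * Q ^ e dvd P * MP" using PQeM MMP by simp
    then show ?thesis using P0 by simp
  qed
  have Qe1: "Q ^ (e - 1) * Q = Q ^ e" using e1 by (cases e) auto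
  have Qee: "Q ^ (e - 1) dvd Q ^ e" by (rule le_imp_power_dvd) simp
  have Qe1M: "Q ^ (e - 1) dvd M" using dvd_trans[OF Qee QeM] .
  have Qe1MP: "Q ^ (e - 1) dvd MP" using dvd_trans[OF Qee QeMP] .
  have Qe1MQ: "Q ^ (e - 1) dvd MQ"
  proof -
    have "Q ^ (e - 1) * Q dvd MQ * Q" using QeM Qe1 MMQ by simp
    then show ?thesis using Q0 by simp
  qed
  have subA: "A \<subseteq> ZM M" and subB: "B \<subseteq> ZM M" using tile unfolding tiling_def by auto
  fix a assume "a \<in> SigmaA M A B (Lam M z (M div (p i * p j)))"
  then obtain b where aA: "a \<in> A" and bB: "b \<in> B" and ab: "int D dvd int z - int ((a + b) mod M)"
    unfolding SigmaA_def Lam_def D_def P_def Q_def by auto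
  obtain b0 where a0A: "a0 \<in> A" and b0B: "b0 \<in> B" and ab0: "int D dvd int z - int ((a0 + b0) mod M)"
    using a0 unfolding SigmaA_def Lam_def D_def P_def Q_def by auto
  have DM: "int D dvd int M" using MD by simp
  have modD: "int D dvd int X - int (X mod M)" for X
  proof -
    have "int X - int (X mod M) = int M * (int X div int M)"
      by (simp add: of_nat_mod minus_mod_eq_mult_div)
    then show ?thesis using DM by simp
  qed
  have "int D dvd (int a + int b) - (int a0 + int b0)"
  proof -
    have "int D dvd (int z - int ((a0 + b0) mod M)) - (int z - int ((a + b) mod M))
       + (int (a + b) - int ((a + b) mod M)) - (int (a0 + b0) - int ((a0 + b0) mod M))"
      by (rule dvd_diff[OF dvd_add[OF dvd_diff[OF ab0 ab] modD[of "a + b"]] modD[of "a0 + b0"]])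
    then show ?thesis by (simp add: algebra_simps)
  qed
  then obtain w where w: "(int a + int b) - (int a0 + int b0) = int D * w" by blast
  obtain u v where uv: "u * int Q + v * int P = gcd (int Q) (int P)" using bezout_int by blast
  have "gcd (int Q) (int P) = 1" using copPQ by (simp add: coprime_commute gcd_int_def)
  then have uv1: "u * int Q + v * int P = 1" using uv by simp
  define kk where "kk = w * u"
  define ll where "ll = w * v"
  have decomp: "(int a + int b) - (int a0 + int b0) = kk * int MP + ll * int MQ"
  proof -
    have "int D * w = int D * w * (u * int Q + v * int P)" using uv1 by simp
    also have "\<dots> = kk * int MP + ll * int MQ" unfolding kk_def ll_def MPD MQD by (simp add: algebra_simps)
    finally show ?thesis using w by simp
  qed
  define k' where "k' = nat (kk mod int P)"
  have k'P: "k' < P" unfolding k'_def using P0 by (simp add: nat_less_iff)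
  have ik': "int k' = kk mod int P" unfolding k'_def using P0 by simp
  define a' where "a' = (a0 + k' * MP) mod M"
  have a'A: "a' \<in> A"
  proof -
    have "k' * (M div P) \<in> F M P" unfolding F_def using k'P by blast
    then have "a' \<in> star M a0 (F M P)" unfolding star_def a'_def MP_def by blast
    then show ?thesis using fiber unfolding P_def by blast
  qed
  have a'cong: "int M dvd int a' - int a0 - kk * int MP"
  proof -
    have "int a' = (int a0 + int k' * int MP) mod int M" unfolding a'_def by (simp add: of_nat_mod)
    then have "int a' - int a0 - kk * int MP
        = ((int a0 + int k' * int MP) mod int M - (int a0 + int k' * int MP)) + (int k' - kk) * int MP"
      by (simp add: algebra_simps)
    also have "(int k' - kk) * int MP = - (kk div int P) * int M"
    proof -
      have h: "int k' - kk = - (kk div int P) * int P" using ik' by (simp add: minus_mod_eq_mult_div[symmetric] algebra_simps)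
      have "(int k' - kk) * int MP = (- (kk div int P) * int P) * int MP" using h by simp
      also have "\<dots> = - (kk div int P) * (int P * int MP)" by (simp add: algebra_simps)
      also have "int P * int MP = int M" using MMP by simp
      finally show ?thesis .
    qed
    finally have e: "int a' - int a0 - kk * int MP
        = ((int a0 + int k' * int MP) mod int M - (int a0 + int k' * int MP)) - (kk div int P) * int M"
      by simp
    have "int M dvd ((int a0 + int k' * int MP) mod int M - (int a0 + int k' * int MP))"
      by (simp add: mod_eq_dvd_iff[symmetric])
    then show ?thesis unfolding e by simp
  qed
  define \<alpha> where "\<alpha> = int a - int a'"
  define \<beta> where "\<beta> = int b - int b0"
  have H1: "int M dvd \<alpha> + \<beta> - ll * int MQ"
  proof -
    have eq: "\<alpha> + \<beta> - ll * int MQ = - (int a' - int a0 - kk * int MP)"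
      unfolding \<alpha>_def \<beta>_def using decomp by (simp add: algebra_simps)
    show ?thesis unfolding eq using a'cong by (simp only: dvd_minus_iff)
  qed
  show "a \<in> Pi_set M a0 (p j ^ (n j - 1))"
    unfolding Pi_set_def Lam_def
  proof (intro CollectI conjI)
    show "a \<in> ZM M" using aA subA by auto
    show "int (p j ^ (n j - 1)) dvd int a0 - int a"
    proof (rule ccontr)
      assume nd: "\<not> int (p j ^ (n j - 1)) dvd int a0 - int a"
      define q where "q = int Q"
      have nd': "\<not> q ^ (e - 1) dvd \<alpha>"
      proof
        assume h: "q ^ (e - 1) dvd \<alpha>"
        have "q ^ (e - 1) dvd int a' - int a0 - kk * int MP"
          using a'cong Qe1M unfolding q_def by (metis dvd_trans of_nat_dvd_iff of_nat_power)
        moreover have "q ^ (e - 1) dvd kk * int MP"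
          using Qe1MP unfolding q_def by (metis dvd_mult of_nat_dvd_iff of_nat_power)
        ultimately have "q ^ (e - 1) dvd (int a' - int a0 - kk * int MP) + kk * int MP + \<alpha>"
          using h by (intro dvd_add) auto
        then have "q ^ (e - 1) dvd - (int a0 - int a)" unfolding \<alpha>_def by (simp add: algebra_simps)
        then have "q ^ (e - 1) dvd int a0 - int a" by (simp only: dvd_minus_iff)
        then show False using nd unfolding q_def Q_def e_def by simp
      qed
      have \<alpha>0: "\<alpha> \<noteq> 0" using nd' by auto
      have pq: "prime q" unfolding q_def using pQ by simp
      have qnu: "\<not> is_unit q" using pq not_prime_unit by blast
      define m where "m = multiplicity q \<alpha>"
      have qm: "q ^ m dvd \<alpha>" unfolding m_def by (rule multiplicity_dvd)
      have qm1: "\<not> q ^ Suc m dvd \<alpha>"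
        using multiplicity_geI[OF \<alpha>0 qnu, of "Suc m"] unfolding m_def by auto
      have me: "m < e - 1"
        using multiplicity_lessI[OF \<alpha>0 qnu nd'] unfolding m_def .
      obtain \<alpha>' where \<alpha>': "\<alpha> = q ^ m * \<alpha>'" using qm by blast
      have nq\<alpha>': "\<not> q dvd \<alpha>'"
      proof
        assume "q dvd \<alpha>'"
        then have "q ^ m * q dvd q ^ m * \<alpha>'" by simp
        then show False using qm1 \<alpha>' by (simp add: power_Suc2)
      qed
      have "coprime q \<alpha>'" by (rule prime_imp_coprime[OF pq nq\<alpha>'])
      then have "coprime \<alpha>' q" by (simp only: coprime_commute)
      then have "gcd \<alpha>' q = 1" by (rule coprime_imp_gcd_eq_1)
      then obtain u2 v2 where uv2: "u2 * \<alpha>' + v2 * q = 1" using bezout_int by metis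
      define sn where "sn = nat ((- ll * u2) mod q)"
      have q0: "q > 0" unfolding q_def using Q0 by simp
      have "(- ll * u2) mod q \<ge> 0" using q0 by (rule pos_mod_sign)
      then have isn: "int sn = (- ll * u2) mod q" unfolding sn_def by (rule nat_0_le)
      define s0 where "s0 = - ll * u2"
      have isn2: "int sn = s0 - q * (s0 div q)" using isn unfolding s0_def
        by (simp add: minus_div_mult_eq_mod[symmetric] mult.commute)
      have uv2': "1 - u2 * \<alpha>' = v2 * q" using uv2 by simp
      have "int sn * \<alpha>' + ll = ll * (1 - u2 * \<alpha>') - q * (s0 div q) * \<alpha>'"
        unfolding isn2 s0_def by (simp add: algebra_simps)
      also have "\<dots> = q * (ll * v2 - (s0 div q) * \<alpha>')" unfolding uv2' by (simp add: algebra_simps)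
      finally have "int sn * \<alpha>' + ll = q * (ll * v2 - (s0 div q) * \<alpha>')" .
      then obtain c where c: "int sn * \<alpha>' + ll = q * c" by blast
      have Qm1M: "Q ^ Suc m dvd M"
      proof -
        have "Suc m \<le> e" using me by simp
        then have "Q ^ Suc m dvd Q ^ e" by (rule le_imp_power_dvd)
        then show ?thesis using QeM by (rule dvd_trans)
      qed
      define N where "N = M div Q ^ Suc m"
      have MN: "M = N * Q ^ Suc m" unfolding N_def using Qm1M by (rule dvd_div_mult_self[symmetric])
      define t where "t = 1 + sn * N"
      have cop: "coprime t M"
      proof (rule ccontr)
        assume nc: "\<not> coprime t M"
        have "gcd t M \<noteq> 1"
        proof
          assume "gcd t M = 1"
          then have "coprime t M" by (rule gcd_eq_1_imp_coprime)
          then show False using nc by blast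
        qed
        then obtain r where r: "prime r" "r dvd gcd t M" using prime_factor_nat by blast
        have rt: "r dvd t" using r(2) dvd_trans gcd_dvd1 by blast
        have rM: "r dvd M" using r(2) dvd_trans gcd_dvd2 by blast
        have rN: "r dvd N"
        proof (cases "r = Q")
          case True
          have "Suc (Suc m) \<le> e" using me by simp
          then have "Q ^ Suc (Suc m) dvd Q ^ e" by (rule le_imp_power_dvd)
          then have "Q ^ Suc (Suc m) dvd M" using QeM by (rule dvd_trans)
          then have "Q * Q ^ Suc m dvd N * Q ^ Suc m" using MN by (simp only: power_Suc)
          moreover have "Q ^ Suc m \<noteq> 0" using Q0 by simp
          ultimately have "Q dvd N" using dvd_times_right_cancel_iff by blast
          then show ?thesis using True by simp
        next
          case False
          have "r dvd N * Q ^ Suc m" using rM MN by simp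
          moreover have "\<not> r dvd Q ^ Suc m"
          proof
            assume "r dvd Q ^ Suc m"
            then have "r dvd Q" using r(1) prime_dvd_power by blast
            then show False using primes_dvd_imp_eq[OF r(1) pQ] False by blast
          qed
          ultimately show ?thesis using r(1) prime_dvd_mult_iff by blast
        qed
        then have "r dvd sn * N" by (rule dvd_mult)
        then have "r dvd 1" using rt unfolding t_def by (simp only: dvd_add_left_iff)
        then show False using r(1) by simp
      qed
      have t0: "t > 0" unfolding t_def by simp
      have T: "tiling M ((\<lambda>x. t * x mod M) ` A) B" by (rule dilate[OF tile cop t0])
      define L where "L = N * Q ^ m"
      have LQ: "int L * q = int M" unfolding L_def q_def using MN by (simp add: power_Suc2 mult.assoc)
      have LMQ: "L = MQ" using LQ MMQ Q0 unfolding q_def by (metis mult_cancel_right of_nat_eq_iff of_nat_mult not_gr0)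
      have key: "int M dvd (int t * int a + int b) - (int t * int a' + int b0)"
      proof -
        have "(int t * int a + int b) - (int t * int a' + int b0) = int t * \<alpha> + \<beta>"
          unfolding \<alpha>_def \<beta>_def by (simp add: algebra_simps)
        also have "int t * \<alpha> = \<alpha> + int sn * \<alpha>' * int L"
          unfolding t_def L_def \<alpha>' q_def by (simp add: algebra_simps)
        also have "int sn * \<alpha>' = q * c - ll" using c by simp
        finally have "(int t * int a + int b) - (int t * int a' + int b0) = (\<alpha> + \<beta> - ll * int MQ) + c * int M"
          using LQ LMQ by (simp add: algebra_simps)
        then show ?thesis using H1 by simp
      qed
      have xeq: "(t * a + b) mod M = (t * a' + b0) mod M"
        by (rule nat_mod_eq_from_int) (use key in simp)
      define x where "x = (t * a + b) mod M"
      have xZ: "x \<in> ZM M" unfolding x_def ZM_def using M0 by simp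
      have ex: "\<exists>!ab. ab \<in> (\<lambda>x. t * x mod M) ` A \<times> B \<and> (fst ab + snd ab) mod M = x"
        using T xZ unfolding tiling_def by blast
      have P1: "(t * a mod M, b) \<in> (\<lambda>x. t * x mod M) ` A \<times> B \<and> (fst (t * a mod M, b) + snd (t * a mod M, b)) mod M = x"
        using aA bB unfolding x_def by (simp add: mod_add_left_eq)
      have P2: "(t * a' mod M, b0) \<in> (\<lambda>x. t * x mod M) ` A \<times> B \<and> (fst (t * a' mod M, b0) + snd (t * a' mod M, b0)) mod M = x"
        using a'A b0B xeq unfolding x_def by (simp add: mod_add_left_eq)
      have "(t * a mod M, b) = (t * a' mod M, b0)"
        using the1_equality[OF ex P1] the1_equality[OF ex P2] by simp
      then have bb: "b = b0" by simp
      then have "int M dvd \<alpha> - ll * int MQ" using H1 unfolding \<beta>_def by simp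
      moreover have "q ^ (e - 1) dvd int M" using Qe1M unfolding q_def by (metis of_nat_dvd_iff of_nat_power)
      moreover have "q ^ (e - 1) dvd ll * int MQ" using Qe1MQ unfolding q_def by (metis dvd_mult of_nat_dvd_iff of_nat_power)
      ultimately have "q ^ (e - 1) dvd (\<alpha> - ll * int MQ) + ll * int MQ"
        by (meson dvd_add dvd_trans)
      then show False using nd' by simp
    qed
  qed
qed

end
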